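(* Consider the correlation Bell expression $\mathcal B_{Z4}$ with Alice's settings indexed by pairs $(i,j)$, $1\le i<j\le 4$ (6 settings), Bob's settings $k=1,\dots,4$, and coefficient matrix $M_{(i,j),k}=\delta_{ik}-\delta_{jk}$. Its maximal classical value is $8$; its maximal value over qubits with measurement directions restricted to the $xz$-plane (vectors $(\sin\theta,0,\cos\theta)$) is $4(1+\sqrt2)$; its maximal value over qubits with arbitrary directions in $S^2$ is $4\sqrt6$; and its maximal quantum value $Q(M)$ is also $4\sqrt6$. In particular, for $\mathcal B_{Z4}$ the maximal quantum value is attained by qubits.
   Context: The quantum value is $Q(M)=\sup\sum M_{(i,j),k}\langle\psi|A_{ij}\otimes B_k|\psi\rangle$ over all finite $D$, unit $|\psi\rangle\in\mathbb{C}^D\otimes\mathbb{C}^D$ and Hermitian $A_{ij},B_k$ on $\mathbb{C}^D$ with $A_{ij}^2=B_k^2=\mathbb{1}$. The classical value is the maximum of $\sum M_{(i,j),k}a_{ij}b_k$ over $a_{ij},b_k\in\{\pm1\}$. The qubit value is the maximum of $\sum M_{(i,j),k}\langle\psi|(\vec a_{ij}\cdot\vec\sigma)\otimes(\vec b_k\cdot\vec\sigma^T)|\psi\rangle$ over unit $|\psi\rangle\in\mathbb{C}^2\otimes\mathbb{C}^2$ and unit vectors $\vec a_{ij},\vec b_k$ in $S^2$ (or in the stated plane), where $\vec\sigma=(\sigma_x,\sigma_y,\sigma_z)$ are the Pauli matrices and $\vec\sigma^T$ their transposes. *)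

theory Defs
  imports Complex_Main "Jordan_Normal_Form.Matrix" "Jordan_Normal_Form.Schur_Decomposition"
begin

text \<open>Vector in C^D \<otimes> C^D is a vector of length D*D, with basis index (a,b) \<mapsto> a*D+b.
  Expectation value  <psi| A \<otimes> B |psi>.\<close>
definition tensor_expect :: "nat \<Rightarrow> complex Matrix.vec \<Rightarrow> complex mat \<Rightarrow> complex mat \<Rightarrow> complex" where
  "tensor_expect D psi A B =
     (\<Sum>a<D. \<Sum>b<D. \<Sum>a'<D. \<Sum>b'<D.
        cnj (psi $ (a*D+b)) * A $$ (a,a') * B $$ (b,b') * psi $ (a'*D+b'))"

definition unit_state :: "nat \<Rightarrow> complex Matrix.vec \<Rightarrow> bool" where
  "unit_state D psi \<longleftrightarrow> psi \<in> carrier_vec (D*D) \<and> (\<Sum>i<D*D. (cmod (psi $ i))\<^sup>2) = 1"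

definition pm_observable :: "nat \<Rightarrow> complex mat \<Rightarrow> bool" where
  "pm_observable D A \<longleftrightarrow> A \<in> carrier_mat D D \<and> mat_adjoint A = A \<and> A * A = 1\<^sub>m D"

definition bell_value :: "'x set \<Rightarrow> 'y set \<Rightarrow> ('x \<Rightarrow> 'y \<Rightarrow> real) \<Rightarrow> nat \<Rightarrow> complex Matrix.vec
    \<Rightarrow> ('x \<Rightarrow> complex mat) \<Rightarrow> ('y \<Rightarrow> complex mat) \<Rightarrow> real" where
  "bell_value X Y M D psi A B = (\<Sum>x\<in>X. \<Sum>y\<in>Y. M x y * Re (tensor_expect D psi (A x) (B y)))"

definition quantum_values :: "'x set \<Rightarrow> 'y set \<Rightarrow> ('x \<Rightarrow> 'y \<Rightarrow> real) \<Rightarrow> real set" where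
  "quantum_values X Y M = {bell_value X Y M D psi A B | D psi A B.
      unit_state D psi \<and> (\<forall>x\<in>X. pm_observable D (A x)) \<and> (\<forall>y\<in>Y. pm_observable D (B y))}"

definition quantum_value :: "'x set \<Rightarrow> 'y set \<Rightarrow> ('x \<Rightarrow> 'y \<Rightarrow> real) \<Rightarrow> real" where
  "quantum_value X Y M = Sup (quantum_values X Y M)"

definition classical_values :: "'x set \<Rightarrow> 'y set \<Rightarrow> ('x \<Rightarrow> 'y \<Rightarrow> real) \<Rightarrow> real set" where
  "classical_values X Y M = {(\<Sum>x\<in>X. \<Sum>y\<in>Y. M x y * a x * b y) | a b.
      (\<forall>x\<in>X. a x \<in> {-1, 1}) \<and> (\<forall>y\<in>Y. b y \<in> {-1, 1})}"

definition sigma_x :: "complex mat" where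
  "sigma_x = mat_of_rows_list 2 [[0, 1], [1, 0]]"
definition sigma_y :: "complex mat" where
  "sigma_y = mat_of_rows_list 2 [[0, -\<i>], [\<i>, 0]]"
definition sigma_z :: "complex mat" where
  "sigma_z = mat_of_rows_list 2 [[1, 0], [0, -1]]"

definition sigma_dot :: "real \<times> real \<times> real \<Rightarrow> complex mat" where
  "sigma_dot v = (case v of (v1, v2, v3) \<Rightarrow>
     complex_of_real v1 \<cdot>\<^sub>m sigma_x + complex_of_real v2 \<cdot>\<^sub>m sigma_y + complex_of_real v3 \<cdot>\<^sub>m sigma_z)"

definition unit_vec3 :: "real \<times> real \<times> real \<Rightarrow> bool" where
  "unit_vec3 v \<longleftrightarrow> (case v of (v1, v2, v3) \<Rightarrow> v1\<^sup>2 + v2\<^sup>2 + v3\<^sup>2 = 1)"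

definition qubit_values :: "(real \<times> real \<times> real) set \<Rightarrow> 'x set \<Rightarrow> 'y set \<Rightarrow> ('x \<Rightarrow> 'y \<Rightarrow> real) \<Rightarrow> real set" where
  "qubit_values S X Y M = {bell_value X Y M 2 psi (\<lambda>x. sigma_dot (a x)) (\<lambda>y. transpose_mat (sigma_dot (b y))) | psi a b.
      unit_state 2 psi \<and> (\<forall>x\<in>X. a x \<in> S) \<and> (\<forall>y\<in>Y. b y \<in> S)}"

definition sphere3 :: "(real \<times> real \<times> real) set" where
  "sphere3 = {v. unit_vec3 v}"

definition xz_circle :: "(real \<times> real \<times> real) set" where
  "xz_circle = {(sin t, 0, cos t) | t. True}"

definition is_max :: "real set \<Rightarrow> real \<Rightarrow> bool" where
  "is_max S m \<longleftrightarrow> m \<in> S \<and> (\<forall>s\<in>S. s \<le> m)"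

definition Z4_alice :: "(nat \<times> nat) set" where
  "Z4_alice = {(i, j). 1 \<le> i \<and> i < j \<and> j \<le> 4}"
definition Z4_bob :: "nat set" where
  "Z4_bob = {1..4}"
definition M_Z4 :: "nat \<times> nat \<Rightarrow> nat \<Rightarrow> real" where
  "M_Z4 ij k = (case ij of (i, j) \<Rightarrow> (if i = k then 1 else 0) - (if j = k then 1 else 0))"

end

theory Submission
  imports Defs
begin


lemma sum_mult_index:
  "(\<Sum>i<m*n. f i) = (\<Sum>a<m. \<Sum>b<n. f (a*n+b))" for f :: "nat \<Rightarrow> 'a::comm_monoid_add"
proof (induction m)
  case 0 then show ?case by simp
next
  case (Suc m)
  have "(\<Sum>i<Suc m*n. f i) = (\<Sum>i<m*n. f i) + (\<Sum>i\<in>{m*n..<m*n+n}. f i)"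
    by (simp add: add.commute sum.atLeastLessThan_concat[symmetric] lessThan_atLeast0 sum.atLeastLessThan_concat)
  also have "(\<Sum>i\<in>{m*n..<m*n+n}. f i) = (\<Sum>b<n. f (m*n+b))"
    using sum.shift_bounds_nat_ivl[of f 0 "m*n" n] by (simp add: lessThan_atLeast0 add.commute)
  finally show ?case using Suc by simp
qed

definition NN :: "nat \<Rightarrow> (nat \<Rightarrow> nat \<Rightarrow> complex) \<Rightarrow> real" where
  "NN D u = (\<Sum>a<D. \<Sum>b<D. (cmod (u a b))\<^sup>2)"
definition IP :: "nat \<Rightarrow> (nat \<Rightarrow> nat \<Rightarrow> complex) \<Rightarrow> (nat \<Rightarrow> nat \<Rightarrow> complex) \<Rightarrow> complex" where
  "IP D u w = (\<Sum>a<D. \<Sum>b<D. cnj (u a b) * w a b)"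
definition Uv :: "nat \<Rightarrow> complex Matrix.vec \<Rightarrow> complex mat \<Rightarrow> nat \<Rightarrow> nat \<Rightarrow> complex" where
  "Uv D psi A a' b = (\<Sum>a<D. cnj (A $$ (a,a')) * psi $ (a*D+b))"
definition Wv :: "nat \<Rightarrow> complex Matrix.vec \<Rightarrow> complex mat \<Rightarrow> nat \<Rightarrow> nat \<Rightarrow> complex" where
  "Wv D psi C a b = (\<Sum>b'<D. psi $ (a*D+b') * C $$ (b,b'))"

lemma te_IP: "tensor_expect D psi A C = IP D (Uv D psi A) (Wv D psi C)"
proof -
  have "IP D (Uv D psi A) (Wv D psi C) =
     (\<Sum>a'<D. \<Sum>b<D. \<Sum>a<D. \<Sum>b'<D. cnj (psi $ (a*D+b)) * A $$ (a,a') * C $$ (b,b') * psi $ (a'*D+b'))"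
    unfolding IP_def Uv_def Wv_def cnj_sum sum_product
    by (rule sum.cong[OF refl])+ (simp add: mult_ac)
  also have "\<dots> = (\<Sum>a'<D. \<Sum>a<D. \<Sum>b<D. \<Sum>b'<D. cnj (psi $ (a*D+b)) * A $$ (a,a') * C $$ (b,b') * psi $ (a'*D+b'))"
    by (rule sum.cong[OF refl], rule sum.swap)
  also have "\<dots> = (\<Sum>a<D. \<Sum>a'<D. \<Sum>b<D. \<Sum>b'<D. cnj (psi $ (a*D+b)) * A $$ (a,a') * C $$ (b,b') * psi $ (a'*D+b'))"
    by (rule sum.swap)
  also have "\<dots> = tensor_expect D psi A C"
    unfolding tensor_expect_def
    by (rule sum.cong[OF refl], rule sum.swap)
  finally show ?thesis by (rule sym)
qed

lemma CS_real:
  fixes a b :: "'a \<Rightarrow> real"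
  shows "(\<Sum>i\<in>I. a i * b i)\<^sup>2 \<le> (\<Sum>i\<in>I. (a i)\<^sup>2) * (\<Sum>i\<in>I. (b i)\<^sup>2)"
proof (cases "(\<Sum>i\<in>I. (b i)\<^sup>2) > 0")
  case False
  then consider "\<And>i. i\<in>I \<Longrightarrow> b i = 0" | "infinite I"
    by (metis (mono_tags, lifting) sum_pos2 zero_le_power2 zero_less_power2)
  thus ?thesis
    by fastforce
next
  case True
  define r where "r \<equiv> (\<Sum>i\<in>I. a i * b i) / (\<Sum>i\<in>I. (b i)\<^sup>2)"
  have "0 \<le> (\<Sum>i\<in>I. (a i - r * b i)\<^sup>2)"
    by (simp add: sum_nonneg)
  also have "... = (\<Sum>i\<in>I. (a i)\<^sup>2 - 2 * r * (a i * b i) + r\<^sup>2 * (b i)\<^sup>2)"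
    by (rule sum.cong) (simp_all add: power2_eq_square algebra_simps)
  also have "... = (\<Sum>i\<in>I. (a i)\<^sup>2) - 2 * r * (\<Sum>i\<in>I. a i * b i) + r\<^sup>2 * (\<Sum>i\<in>I. (b i)\<^sup>2)"
    by (simp only: sum.distrib sum_subtractf sum_distrib_left)
  also have "\<dots> = (\<Sum>i\<in>I. (a i)\<^sup>2) - ((\<Sum>i\<in>I. a i * b i))\<^sup>2 / (\<Sum>i\<in>I. (b i)\<^sup>2)"
    by (simp add: r_def power2_eq_square)
  finally have "0 \<le> (\<Sum>i\<in>I. (a i)\<^sup>2) - ((\<Sum>i\<in>I. a i * b i))\<^sup>2 / (\<Sum>i\<in>I. (b i)\<^sup>2)" .
  then show ?thesis using True by (simp add: field_simps)
qed

lemma IP_CS: "cmod (IP D u w) \<le> sqrt (NN D u) * sqrt (NN D w)"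
proof -
  let ?S = "{..<D} \<times> {..<D}"
  have "cmod (IP D u w) \<le> (\<Sum>p\<in>?S. cmod (u (fst p) (snd p)) * cmod (w (fst p) (snd p)))"
    unfolding IP_def sum.cartesian_product
    by (rule order_trans[OF norm_sum]) (simp add: norm_mult split_def)
  also have "\<dots> \<le> sqrt ((\<Sum>p\<in>?S. (cmod (u (fst p) (snd p)))\<^sup>2) * (\<Sum>p\<in>?S. (cmod (w (fst p) (snd p)))\<^sup>2))"
    by (rule real_le_rsqrt, rule CS_real)
  also have "\<dots> = sqrt (NN D u) * sqrt (NN D w)"
    unfolding NN_def sum.cartesian_product by (simp add: split_def real_sqrt_mult)
  finally show ?thesis .
qed

lemma core_norm:
  fixes M :: "nat \<Rightarrow> nat \<Rightarrow> complex" and c :: real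
  assumes H: "\<And>k k'. k<D \<Longrightarrow> k'<D \<Longrightarrow> (\<Sum>j<D. cnj (M j k) * M j k') = (if k = k' then complex_of_real c else 0)"
  shows "(\<Sum>j<D. (cmod (\<Sum>k<D. x k * M j k))\<^sup>2) = c * (\<Sum>k<D. (cmod (x k))\<^sup>2)"
proof -
  have "complex_of_real (\<Sum>j<D. (cmod (\<Sum>k<D. x k * M j k))\<^sup>2)
      = (\<Sum>j<D. (\<Sum>k<D. x k * M j k) * cnj (\<Sum>k'<D. x k' * M j k'))"
    by (simp only: of_real_sum complex_norm_square)
  also have "\<dots> = (\<Sum>j<D. \<Sum>k<D. \<Sum>k'<D. (x k * cnj (x k')) * (M j k * cnj (M j k')))"
    unfolding cnj_sum sum_product by (rule sum.cong[OF refl])+ (simp add: mult_ac)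
  also have "\<dots> = (\<Sum>k<D. \<Sum>j<D. \<Sum>k'<D. (x k * cnj (x k')) * (M j k * cnj (M j k')))"
    by (rule sum.swap)
  also have "\<dots> = (\<Sum>k<D. \<Sum>k'<D. \<Sum>j<D. (x k * cnj (x k')) * (M j k * cnj (M j k')))"
    by (rule sum.cong[OF refl], rule sum.swap)
  also have "\<dots> = (\<Sum>k<D. \<Sum>k'<D. (x k * cnj (x k')) * (\<Sum>j<D. M j k * cnj (M j k')))"
    by (simp add: sum_distrib_left)
  also have "\<dots> = (\<Sum>k<D. \<Sum>k'<D. (x k * cnj (x k')) * (if k = k' then complex_of_real c else 0))"
  proof (rule sum.cong[OF refl], rule sum.cong[OF refl])
    fix k k' assume "k \<in> {..<D}" "k' \<in> {..<D}"
    then have "(\<Sum>j<D. M j k * cnj (M j k')) = cnj (\<Sum>j<D. cnj (M j k) * M j k')"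
      by simp
    also have "\<dots> = (if k = k' then complex_of_real c else 0)"
      using H[of k k'] \<open>k \<in> {..<D}\<close> \<open>k' \<in> {..<D}\<close> by auto
    finally show "(x k * cnj (x k')) * (\<Sum>j<D. M j k * cnj (M j k')) = (x k * cnj (x k')) * (if k = k' then complex_of_real c else 0)"
      by simp
  qed
  also have "\<dots> = (\<Sum>k<D. x k * cnj (x k) * complex_of_real c)"
    by (simp add: if_distrib cong: if_cong)
  also have "\<dots> = (\<Sum>k<D. complex_of_real (c * (cmod (x k))\<^sup>2))"
    by (rule sum.cong[OF refl]) (simp only: of_real_mult complex_norm_square mult_ac)
  also have "\<dots> = complex_of_real (c * (\<Sum>k<D. (cmod (x k))\<^sup>2))"
    by (simp only: of_real_sum sum_distrib_left)
  finally show ?thesis using of_real_eq_iff by blast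
qed

lemma sum2: "(\<Sum>k<(2::nat). f k) = f 0 + f 1"
  by (simp add: numeral_2_eq_2)

lemma mult_index: "A \<in> carrier_mat n n \<Longrightarrow> B \<in> carrier_mat n n \<Longrightarrow> i < n \<Longrightarrow> j < n \<Longrightarrow>
  (A * B) $$ (i,j) = (\<Sum>k<n. A $$ (i,k) * B $$ (k,j))"
  by (simp add: scalar_prod_def lessThan_atLeast0)

lemma adj_index: "A \<in> carrier_mat n n \<Longrightarrow> i < n \<Longrightarrow> j < n \<Longrightarrow> mat_adjoint A $$ (i,j) = cnj (A $$ (j,i))"
proof -
  assume A: "A \<in> carrier_mat n n" and i: "i < n" and j: "j < n"
  have d: "dim_row A = n" "dim_col A = n" using A by auto
  have "mat_adjoint A $$ (i,j) = map conjugate (cols A) ! i $ j"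
    unfolding mat_adjoint_def d(1) by (rule mat_of_rows_index) (simp_all add: d i j)
  also have "\<dots> = conjugate (col A i $ j)" using d i j by simp
  also have "\<dots> = cnj (A $$ (j,i))" using d i j by simp
  finally show ?thesis .
qed

lemma adj_carrier: "A \<in> carrier_mat n n \<Longrightarrow> mat_adjoint A \<in> carrier_mat n n"
proof -
  assume A: "A \<in> carrier_mat n n"
  have l: "length (map conjugate (cols A)) = n" using A by simp
  have "mat_of_rows (dim_row A) (map conjugate (cols A)) \<in> carrier_mat (length (map conjugate (cols A))) (dim_row A)"
    by (rule mat_of_rows_carrier(1))
  then show ?thesis unfolding mat_adjoint_def l using A by simp
qed

lemma herm_entry:
  assumes "pm_observable D B" "i < D" "j < D"
  shows "B $$ (i,j) = cnj (B $$ (j,i))"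
proof -
  have B: "B \<in> carrier_mat D D" "mat_adjoint B = B" using assms(1) by (auto simp: pm_observable_def)
  have "B $$ (i,j) = mat_adjoint B $$ (i,j)" using B by simp
  also have "\<dots> = cnj (B $$ (j,i))" using adj_index[OF B(1) assms(2,3)] .
  finally show ?thesis .
qed

lemma pm_cond_right:
  assumes "pm_observable D B" "k < D" "k' < D"
  shows "(\<Sum>j<D. cnj (B $$ (j,k)) * B $$ (j,k')) = (if k = k' then 1 else 0)"
proof -
  have B: "B \<in> carrier_mat D D" "B * B = 1\<^sub>m D" using assms(1) by (auto simp: pm_observable_def)
  have "(B * B) $$ (k,k') = (\<Sum>j<D. B $$ (k,j) * B $$ (j,k'))"
    using mult_index[OF B(1) B(1) assms(2,3)] .
  also have "\<dots> = (\<Sum>j<D. cnj (B $$ (j,k)) * B $$ (j,k'))"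
    by (rule sum.cong[OF refl]) (subst herm_entry[OF assms(1) assms(2)], auto)
  finally show ?thesis using assms B by simp
qed

lemma pm_cond_left:
  assumes "pm_observable D A" "k < D" "k' < D"
  shows "(\<Sum>j<D. A $$ (k,j) * cnj (A $$ (k',j))) = (if k = k' then 1 else 0)"
proof -
  have B: "A \<in> carrier_mat D D" "A * A = 1\<^sub>m D" using assms(1) by (auto simp: pm_observable_def)
  have "(A * A) $$ (k,k') = (\<Sum>j<D. A $$ (k,j) * A $$ (j,k'))"
    using mult_index[OF B(1) B(1) assms(2,3)] .
  also have "\<dots> = (\<Sum>j<D. A $$ (k,j) * cnj (A $$ (k',j)))"
    by (rule sum.cong[OF refl]) (subst herm_entry[OF assms(1) _ assms(3)], auto)
  finally show ?thesis using assms B by simp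
qed

lemma unit_NN: "unit_state D psi \<Longrightarrow> NN D (\<lambda>a b. psi $ (a*D+b)) = 1"
  by (simp add: unit_state_def NN_def sum_mult_index)

lemma NN_W:
  assumes "pm_observable D B" "unit_state D psi"
  shows "NN D (Wv D psi B) = 1"
proof -
  have "NN D (Wv D psi B) = (\<Sum>a<D. 1 * (\<Sum>k<D. (cmod (psi $ (a*D+k)))\<^sup>2))"
    unfolding NN_def Wv_def
    by (rule sum.cong[OF refl], rule core_norm) (use pm_cond_right[OF assms(1)] in simp)
  also have "\<dots> = 1" using unit_NN[OF assms(2)] by (simp add: NN_def)
  finally show ?thesis .
qed

lemma NN_U:
  assumes "pm_observable D A" "unit_state D psi"
  shows "NN D (Uv D psi A) = 1"
proof -
  have "NN D (Uv D psi A) = (\<Sum>b<D. \<Sum>a'<D. (cmod (\<Sum>a<D. psi $ (a*D+b) * cnj (A $$ (a,a'))))\<^sup>2)"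
    unfolding NN_def Uv_def by (subst sum.swap) (simp add: mult.commute)
  also have "\<dots> = (\<Sum>b<D. 1 * (\<Sum>k<D. (cmod (psi $ (k*D+b)))\<^sup>2))"
    by (rule sum.cong[OF refl], rule core_norm) (use pm_cond_left[OF assms(1)] in simp)
  also have "\<dots> = (\<Sum>k<D. \<Sum>b<D. (cmod (psi $ (k*D+b)))\<^sup>2)"
    by (simp only: mult_1_left) (rule sum.swap)
  also have "\<dots> = 1" using unit_NN[OF assms(2)] by (simp add: NN_def)
  finally show ?thesis .
qed

lemma NN_nonneg: "0 \<le> NN D u"
  by (simp add: NN_def sum_nonneg)

lemma NN_diff: "NN D (\<lambda>a b. u a b - w a b) = NN D u + NN D w - 2 * Re (IP D u w)"
proof -
  have pt: "\<And>x y::complex. (cmod (x - y))\<^sup>2 = (cmod x)\<^sup>2 + (cmod y)\<^sup>2 - 2 * Re (cnj x * y)"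
    by (simp only: cmod_power2) (simp add: power2_eq_square algebra_simps)
  have "NN D (\<lambda>a b. u a b - w a b) = (\<Sum>a<D. \<Sum>b<D. (cmod (u a b))\<^sup>2 + (cmod (w a b))\<^sup>2 - 2 * Re (cnj (u a b) * w a b))"
    unfolding NN_def by (simp only: pt)
  also have "\<dots> = NN D u + NN D w - 2 * Re (IP D u w)"
    unfolding NN_def IP_def Re_sum by (simp only: sum.distrib sum_subtractf sum_distrib_left)
  finally show ?thesis .
qed

lemma IP_diff: "IP D u (\<lambda>a b. w1 a b - w2 a b) = IP D u w1 - IP D u w2"
  unfolding IP_def by (simp only: right_diff_distrib sum_subtractf)

lemma NN_sum4: "NN D (\<lambda>a b. w1 a b + w2 a b + w3 a b + w4 a b) =
   NN D w1 + NN D w2 + NN D w3 + NN D w4 + 2 * (Re (IP D w1 w2) + Re (IP D w1 w3) + Re (IP D w1 w4)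
     + Re (IP D w2 w3) + Re (IP D w2 w4) + Re (IP D w3 w4))"
proof -
  have pt: "\<And>x1 x2 x3 x4::complex. (cmod (x1+x2+x3+x4))\<^sup>2 = (cmod x1)\<^sup>2 + (cmod x2)\<^sup>2 + (cmod x3)\<^sup>2 + (cmod x4)\<^sup>2
     + 2 * Re (cnj x1 * x2) + 2 * Re (cnj x1 * x3) + 2 * Re (cnj x1 * x4) + 2 * Re (cnj x2 * x3) + 2 * Re (cnj x2 * x4) + 2 * Re (cnj x3 * x4)"
    by (simp only: cmod_power2) (simp add: power2_eq_square algebra_simps)
  show ?thesis unfolding NN_def IP_def Re_sum
    by (simp only: pt sum.distrib sum_distrib_left distrib_left)
qed

lemma sqrt6_lemma:
  fixes x1 x2 x3 x4 x5 x6 :: real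
  assumes "0 \<le> x1" "0 \<le> x2" "0 \<le> x3" "0 \<le> x4" "0 \<le> x5" "0 \<le> x6"
    "x1 + x2 + x3 + x4 + x5 + x6 \<le> 16"
  shows "sqrt x1 + sqrt x2 + sqrt x3 + sqrt x4 + sqrt x5 + sqrt x6 \<le> 4 * sqrt 6"
proof -
  define s1 where "s1 = sqrt x1"
  define s2 where "s2 = sqrt x2"
  define s3 where "s3 = sqrt x3"
  define s4 where "s4 = sqrt x4"
  define s5 where "s5 = sqrt x5"
  define s6 where "s6 = sqrt x6"
  have sq: "s1\<^sup>2 = x1" "s2\<^sup>2 = x2" "s3\<^sup>2 = x3" "s4\<^sup>2 = x4" "s5\<^sup>2 = x5" "s6\<^sup>2 = x6"
    using assms by (simp_all add: s1_def s2_def s3_def s4_def s5_def s6_def)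
  have id: "6 * (s1\<^sup>2 + s2\<^sup>2 + s3\<^sup>2 + s4\<^sup>2 + s5\<^sup>2 + s6\<^sup>2) - (s1 + s2 + s3 + s4 + s5 + s6)\<^sup>2 =
    (s1-s2)\<^sup>2 + (s1-s3)\<^sup>2 + (s1-s4)\<^sup>2 + (s1-s5)\<^sup>2 + (s1-s6)\<^sup>2 + (s2-s3)\<^sup>2 + (s2-s4)\<^sup>2 + (s2-s5)\<^sup>2
    + (s2-s6)\<^sup>2 + (s3-s4)\<^sup>2 + (s3-s5)\<^sup>2 + (s3-s6)\<^sup>2 + (s4-s5)\<^sup>2 + (s4-s6)\<^sup>2 + (s5-s6)\<^sup>2"
    by (simp add: power2_eq_square algebra_simps)
  have "0 \<le> (s1-s2)\<^sup>2 + (s1-s3)\<^sup>2 + (s1-s4)\<^sup>2 + (s1-s5)\<^sup>2 + (s1-s6)\<^sup>2 + (s2-s3)\<^sup>2 + (s2-s4)\<^sup>2 + (s2-s5)\<^sup>2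
    + (s2-s6)\<^sup>2 + (s3-s4)\<^sup>2 + (s3-s5)\<^sup>2 + (s3-s6)\<^sup>2 + (s4-s5)\<^sup>2 + (s4-s6)\<^sup>2 + (s5-s6)\<^sup>2"
    by simp
  then have "(s1 + s2 + s3 + s4 + s5 + s6)\<^sup>2 \<le> 6 * (s1\<^sup>2 + s2\<^sup>2 + s3\<^sup>2 + s4\<^sup>2 + s5\<^sup>2 + s6\<^sup>2)"
    using id by linarith
  also have "\<dots> \<le> 96" using sq assms(7) by simp
  finally have "s1 + s2 + s3 + s4 + s5 + s6 \<le> sqrt 96" by (rule real_le_rsqrt)
  also have "sqrt 96 = 4 * sqrt 6"
    using real_sqrt_mult[of 16 6] by simp
  finally show ?thesis by (simp add: s1_def s2_def s3_def s4_def s5_def s6_def)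
qed

lemma four_bound:
  assumes "NN D w1 = 1" "NN D w2 = 1" "NN D w3 = 1" "NN D w4 = 1"
  shows "sqrt (NN D (\<lambda>a b. w1 a b - w2 a b)) + sqrt (NN D (\<lambda>a b. w1 a b - w3 a b))
       + sqrt (NN D (\<lambda>a b. w1 a b - w4 a b)) + sqrt (NN D (\<lambda>a b. w2 a b - w3 a b))
       + sqrt (NN D (\<lambda>a b. w2 a b - w4 a b)) + sqrt (NN D (\<lambda>a b. w3 a b - w4 a b)) \<le> 4 * sqrt 6"
proof (rule sqrt6_lemma)
  have "0 \<le> NN D (\<lambda>a b. w1 a b + w2 a b + w3 a b + w4 a b)" by (rule NN_nonneg)
  then show "NN D (\<lambda>a b. w1 a b - w2 a b) + NN D (\<lambda>a b. w1 a b - w3 a b)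
       + NN D (\<lambda>a b. w1 a b - w4 a b) + NN D (\<lambda>a b. w2 a b - w3 a b)
       + NN D (\<lambda>a b. w2 a b - w4 a b) + NN D (\<lambda>a b. w3 a b - w4 a b) \<le> 16"
    unfolding NN_diff NN_sum4 using assms by simp
qed (rule NN_nonneg)+

lemma pair_bound:
  assumes "NN D u = 1"
  shows "Re (IP D u w1) - Re (IP D u w2) \<le> sqrt (NN D (\<lambda>a b. w1 a b - w2 a b))"
proof -
  have "Re (IP D u w1) - Re (IP D u w2) = Re (IP D u (\<lambda>a b. w1 a b - w2 a b))"
    by (simp add: IP_diff)
  also have "\<dots> \<le> cmod (IP D u (\<lambda>a b. w1 a b - w2 a b))" by (rule complex_Re_le_cmod)
  also have "\<dots> \<le> sqrt (NN D u) * sqrt (NN D (\<lambda>a b. w1 a b - w2 a b))" by (rule IP_CS)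
  finally show ?thesis using assms by simp
qed

lemma Z4_alice_eq: "Z4_alice = {(1,2),(1,3),(1,4),(2,3),(2,4),(3,4)}"
proof -
  have "\<And>i j::nat. 1 \<le> i \<Longrightarrow> i < j \<Longrightarrow> j \<le> 4 \<Longrightarrow>
     (i,j) \<in> {(1,2),(1,3),(1,4),(2,3),(2,4),(3,4)}"
  proof -
    fix i j :: nat assume "1 \<le> i" "i < j" "j \<le> 4"
    then have "(i = 1 \<and> j = 2) \<or> (i = 1 \<and> j = 3) \<or> (i = 1 \<and> j = 4) \<or> (i = 2 \<and> j = 3) \<or> (i = 2 \<and> j = 4) \<or> (i = 3 \<and> j = 4)"
      by arith
    then show "(i,j) \<in> {(1,2),(1,3),(1,4),(2,3),(2,4),(3,4)}" by auto
  qed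
  then show ?thesis unfolding Z4_alice_def by auto
qed

lemma Z4_bob_eq: "Z4_bob = {1,2,3,4}"
  unfolding Z4_bob_def by auto

lemma bell_Z4:
  "bell_value Z4_alice Z4_bob M_Z4 D psi A B =
     (Re (tensor_expect D psi (A (1,2)) (B 1)) - Re (tensor_expect D psi (A (1,2)) (B 2)))
   + (Re (tensor_expect D psi (A (1,3)) (B 1)) - Re (tensor_expect D psi (A (1,3)) (B 3)))
   + (Re (tensor_expect D psi (A (1,4)) (B 1)) - Re (tensor_expect D psi (A (1,4)) (B 4)))
   + (Re (tensor_expect D psi (A (2,3)) (B 2)) - Re (tensor_expect D psi (A (2,3)) (B 3)))
   + (Re (tensor_expect D psi (A (2,4)) (B 2)) - Re (tensor_expect D psi (A (2,4)) (B 4)))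
   + (Re (tensor_expect D psi (A (3,4)) (B 3)) - Re (tensor_expect D psi (A (3,4)) (B 4)))"
  unfolding bell_value_def Z4_alice_eq Z4_bob_eq by (simp add: M_Z4_def)

lemma quantum_bound:
  assumes psi: "unit_state D psi" and A: "\<forall>x\<in>Z4_alice. pm_observable D (A x)"
    and B: "\<forall>y\<in>Z4_bob. pm_observable D (B y)"
  shows "bell_value Z4_alice Z4_bob M_Z4 D psi A B \<le> 4 * sqrt 6"
proof -
  define W where "W k = Wv D psi (B k)" for k
  define U where "U x = Uv D psi (A x)" for x
  have NW: "NN D (W k) = 1" if "k \<in> Z4_bob" for k using NN_W[OF _ psi] B that by (simp add: W_def)
  have NU: "NN D (U x) = 1" if "x \<in> Z4_alice" for x using NN_U[OF _ psi] A that by (simp add: U_def)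
  have T: "Re (tensor_expect D psi (A x) (B i)) - Re (tensor_expect D psi (A x) (B j))
     \<le> sqrt (NN D (\<lambda>a b. W i a b - W j a b))" if "x \<in> Z4_alice" for x i j
    unfolding te_IP W_def[symmetric] U_def[symmetric] by (rule pair_bound[OF NU[OF that]])
  have "bell_value Z4_alice Z4_bob M_Z4 D psi A B \<le>
      sqrt (NN D (\<lambda>a b. W 1 a b - W 2 a b)) + sqrt (NN D (\<lambda>a b. W 1 a b - W 3 a b))
       + sqrt (NN D (\<lambda>a b. W 1 a b - W 4 a b)) + sqrt (NN D (\<lambda>a b. W 2 a b - W 3 a b))
       + sqrt (NN D (\<lambda>a b. W 2 a b - W 4 a b)) + sqrt (NN D (\<lambda>a b. W 3 a b - W 4 a b))"
    unfolding bell_Z4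
    using T[of "(1,2)" 1 2] T[of "(1,3)" 1 3] T[of "(1,4)" 1 4] T[of "(2,3)" 2 3] T[of "(2,4)" 2 4] T[of "(3,4)" 3 4]
    by (simp add: Z4_alice_eq)
  also have "\<dots> \<le> 4 * sqrt 6"
    by (rule four_bound) (simp_all add: NW Z4_bob_eq)
  finally show ?thesis .
qed



lemma jensen2:
  fixes a b :: real
  assumes "0 \<le> a" "0 \<le> b" "a + b \<le> 2*pi"
  shows "sin a + sin b \<le> 2 * sin ((a+b)/2)"
proof -
  have "0 \<le> sin ((a+b)/2)" using assms by (intro sin_ge_zero) auto
  then have "sin ((a+b)/2) * cos ((a-b)/2) \<le> sin ((a+b)/2)"
    using cos_le_one mult_left_le by blast
  then show ?thesis unfolding sin_plus_sin by simp
qed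

lemma sides_bound:
  fixes g1 g2 g3 g4 :: real
  assumes "0 \<le> g1" "0 \<le> g2" "0 \<le> g3" "0 \<le> g4" "g1 + g2 + g3 + g4 = pi"
  shows "sin g1 + sin g2 + sin g3 + sin g4 \<le> 2 * sqrt 2"
proof -
  have "sin g1 + sin g2 \<le> 2 * sin ((g1+g2)/2)" using assms by (intro jensen2) auto
  moreover have "sin g3 + sin g4 \<le> 2 * sin ((g3+g4)/2)" using assms by (intro jensen2) auto
  moreover have h: "(g1+g2)/2 + (g3+g4)/2 = pi/2" by (subst assms(5)[symmetric]) (simp add: field_simps)
  moreover have "sin ((g1+g2)/2) + sin ((g3+g4)/2) \<le> 2 * sin (((g1+g2)/2 + (g3+g4)/2)/2)"
    apply (rule jensen2) using assms apply simp using assms apply simp using h pi_gt_zero by linarith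
  moreover have "((g1+g2)/2 + (g3+g4)/2)/2 = pi/4" by (simp only: h)
  ultimately show ?thesis by (simp add: sin_45)
qed

definition Fs :: "real \<Rightarrow> real \<Rightarrow> real \<Rightarrow> real \<Rightarrow> real" where
  "Fs a b c d = \<bar>sin (a-b)\<bar> + \<bar>sin (a-c)\<bar> + \<bar>sin (a-d)\<bar> + \<bar>sin (b-c)\<bar> + \<bar>sin (b-d)\<bar> + \<bar>sin (c-d)\<bar>"

lemma abs_sin_comm: "\<bar>sin (x - y)\<bar> = \<bar>sin (y - x)\<bar>" for x y :: real
proof -
  have "x - y = -(y - x)" by simp
  then show ?thesis by (simp only: sin_minus abs_minus_cancel)
qed

lemma Fs_sorted:
  assumes "a \<le> b" "b \<le> c" "c \<le> d" "d - a \<le> pi"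
  shows "Fs a b c d \<le> 2 + 2 * sqrt 2"
proof -
  have pos: "0 \<le> sin (y - x)" if "x \<le> y" "y - x \<le> pi" for x y
    using that by (intro sin_ge_zero) auto
  have e: "\<bar>sin (x - y)\<bar> = sin (y - x)" if "x \<le> y" "y - x \<le> pi" for x y
    using pos[OF that] abs_sin_comm[of x y] by simp
  have "Fs a b c d = sin (b-a) + sin (c-a) + sin (d-a) + sin (c-b) + sin (d-b) + sin (d-c)"
    unfolding Fs_def using assms by (simp add: e)
  moreover have "sin (d - a) = sin (pi - (d - a))" by simp
  moreover have "sin (b-a) + sin (c-b) + sin (d-c) + sin (pi - (d - a)) \<le> 2 * sqrt 2"
    using assms by (intro sides_bound) auto
  moreover have "sin (c-a) \<le> 1" "sin (d-b) \<le> 1" by simp_all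
  ultimately show ?thesis by linarith
qed

lemma Fs_sw12: "Fs b a c d = Fs a b c d"
  unfolding Fs_def using abs_sin_comm[of a b] by simp
lemma Fs_sw34: "Fs a b d c = Fs a b c d"
  unfolding Fs_def using abs_sin_comm[of c d] by simp
lemma Fs_sw13: "Fs c b a d = Fs a b c d"
  unfolding Fs_def using abs_sin_comm[of a b] abs_sin_comm[of b c] abs_sin_comm[of a c] by simp
lemma Fs_sw24: "Fs a d c b = Fs a b c d"
  unfolding Fs_def using abs_sin_comm[of b c] abs_sin_comm[of c d] abs_sin_comm[of b d] by simp
lemma Fs_sw23: "Fs a c b d = Fs a b c d"
  unfolding Fs_def using abs_sin_comm[of b c] by simp

lemma Fs_ce12: "Fs (min a b) (max a b) c d = Fs a b c d"
  by (cases "a \<le> b") (simp_all add: min_def max_def Fs_sw12)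
lemma Fs_ce34: "Fs a b (min c d) (max c d) = Fs a b c d"
  by (cases "c \<le> d") (simp_all add: min_def max_def Fs_sw34)
lemma Fs_ce13: "Fs (min a c) b (max a c) d = Fs a b c d"
  by (cases "a \<le> c") (simp_all add: min_def max_def Fs_sw13)
lemma Fs_ce24: "Fs a (min b d) c (max b d) = Fs a b c d"
  by (cases "b \<le> d") (simp_all add: min_def max_def Fs_sw24)
lemma Fs_ce23: "Fs a (min b c) (max b c) d = Fs a b c d"
  by (cases "b \<le> c") (simp_all add: min_def max_def Fs_sw23)

lemma Fs_box:
  assumes "0 \<le> a" "a < pi" "0 \<le> b" "b < pi" "0 \<le> c" "c < pi" "0 \<le> d" "d < pi"
  shows "Fs a b c d \<le> 2 + 2 * sqrt 2"
proof -
  define s1 where "s1 = min a b"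
  define s2 where "s2 = max a b"
  define s3 where "s3 = min c d"
  define s4 where "s4 = max c d"
  define t1 where "t1 = min s1 s3"
  define t3 where "t3 = max s1 s3"
  define t2 where "t2 = min s2 s4"
  define t4 where "t4 = max s2 s4"
  define u2 where "u2 = min t2 t3"
  define u3 where "u3 = max t2 t3"
  have "Fs a b c d = Fs t1 u2 u3 t4"
    unfolding u2_def u3_def Fs_ce23 t1_def t2_def t3_def t4_def Fs_ce24 Fs_ce13
      s1_def s2_def s3_def s4_def Fs_ce34 Fs_ce12 ..
  also have "\<dots> \<le> 2 + 2 * sqrt 2"
    by (rule Fs_sorted) (use assms in \<open>auto simp: u2_def u3_def t1_def t2_def t3_def t4_def s1_def s2_def s3_def s4_def min_def max_def\<close>)
  finally show ?thesis .
qed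

lemma abs_sin_shift: "\<bar>sin (x + of_int n * pi)\<bar> = \<bar>sin x\<bar>" for x :: real
proof -
  have s: "sin (of_int n * pi) = 0" using sin_times_pi_eq_0[of "of_int n"] by simp
  have "(cos (of_int n * pi))\<^sup>2 = 1" using sin_cos_squared_add[of "of_int n * pi"] s by simp
  then have "cos (of_int n * pi) = 1 \<or> cos (of_int n * pi) = -1" by (simp add: power2_eq_1_iff)
  then have "\<bar>cos (of_int n * pi)\<bar> = 1" by auto
  then show ?thesis by (simp add: sin_add s abs_mult)
qed

lemma Fs_all: "Fs a b c d \<le> 2 + 2 * sqrt 2"
proof -
  define r where "r x = x - pi * of_int \<lfloor>x / pi\<rfloor>" for x
  have rr: "0 \<le> r x \<and> r x < pi" for x
  proof -
    have f1: "of_int \<lfloor>x / pi\<rfloor> \<le> x / pi" and f2: "x / pi < of_int \<lfloor>x / pi\<rfloor> + 1" by linarith+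
    have "pi * of_int \<lfloor>x / pi\<rfloor> \<le> pi * (x / pi)" using f1 pi_ge_zero by (rule mult_left_mono)
    moreover have "pi * (x / pi) < pi * (of_int \<lfloor>x / pi\<rfloor> + 1)" using f2 pi_gt_zero by (rule mult_strict_left_mono)
    ultimately have "pi * of_int \<lfloor>x / pi\<rfloor> \<le> pi * (x / pi)" "pi * (x / pi) < pi * (of_int \<lfloor>x / pi\<rfloor> + 1)" by blast+
    then have "pi * of_int \<lfloor>x / pi\<rfloor> \<le> x" "x < pi * (of_int \<lfloor>x / pi\<rfloor> + 1)"
      by simp_all
    then show ?thesis by (simp add: r_def algebra_simps)
  qed
  have sh: "\<bar>sin (r x - r y)\<bar> = \<bar>sin (x - y)\<bar>" for x y
  proof -
    have "r x - r y = (x - y) + of_int (\<lfloor>y / pi\<rfloor> - \<lfloor>x / pi\<rfloor>) * pi" by (simp add: r_def algebra_simps)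
    then show ?thesis using abs_sin_shift by metis
  qed
  have "Fs a b c d = Fs (r a) (r b) (r c) (r d)" unfolding Fs_def sh ..
  also have "\<dots> \<le> 2 + 2 * sqrt 2" using rr by (intro Fs_box) auto
  finally show ?thesis .
qed

lemma chord: "sqrt ((sin a - sin b)\<^sup>2 + (cos a - cos b)\<^sup>2) = 2 * \<bar>sin (a/2 - b/2)\<bar>" for a b :: real
proof -
  have "(sin a - sin b)\<^sup>2 + (cos a - cos b)\<^sup>2 = 2 - 2 * cos (a - b)"
    using sin_cos_squared_add[of a] sin_cos_squared_add[of b]
    by (simp add: cos_diff power2_eq_square algebra_simps)
  also have "cos (a - b) = cos (2 * (a/2 - b/2))" by simp
  also have "\<dots> = 1 - 2 * (sin (a/2 - b/2))\<^sup>2" by (rule cos_double_sin)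
  finally have "(sin a - sin b)\<^sup>2 + (cos a - cos b)\<^sup>2 = (2 * sin (a/2 - b/2))\<^sup>2" by (simp add: power2_eq_square)
  then show ?thesis by (simp only: real_sqrt_abs abs_mult)
qed

lemma planar:
  "sqrt ((sin t1 - sin t2)\<^sup>2 + (cos t1 - cos t2)\<^sup>2) + sqrt ((sin t1 - sin t3)\<^sup>2 + (cos t1 - cos t3)\<^sup>2)
 + sqrt ((sin t1 - sin t4)\<^sup>2 + (cos t1 - cos t4)\<^sup>2) + sqrt ((sin t2 - sin t3)\<^sup>2 + (cos t2 - cos t3)\<^sup>2)
 + sqrt ((sin t2 - sin t4)\<^sup>2 + (cos t2 - cos t4)\<^sup>2) + sqrt ((sin t3 - sin t4)\<^sup>2 + (cos t3 - cos t4)\<^sup>2)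
 \<le> 4 * (1 + sqrt 2)"
proof -
  have "sqrt ((sin t1 - sin t2)\<^sup>2 + (cos t1 - cos t2)\<^sup>2) + sqrt ((sin t1 - sin t3)\<^sup>2 + (cos t1 - cos t3)\<^sup>2)
 + sqrt ((sin t1 - sin t4)\<^sup>2 + (cos t1 - cos t4)\<^sup>2) + sqrt ((sin t2 - sin t3)\<^sup>2 + (cos t2 - cos t3)\<^sup>2)
 + sqrt ((sin t2 - sin t4)\<^sup>2 + (cos t2 - cos t4)\<^sup>2) + sqrt ((sin t3 - sin t4)\<^sup>2 + (cos t3 - cos t4)\<^sup>2)
   = 2 * Fs (t1/2) (t2/2) (t3/2) (t4/2)"
    unfolding chord Fs_def by (simp only: distrib_left)
  also have "\<dots> \<le> 2 * (2 + 2 * sqrt 2)" by (rule mult_left_mono[OF Fs_all]) simp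
  finally show ?thesis by simp
qed



lemma sd_dims[simp]: "dim_row (sigma_dot v) = 2" "dim_col (sigma_dot v) = 2"
  by (cases v, simp add: sigma_dot_def sigma_x_def sigma_y_def sigma_z_def mat_of_rows_list_def)+

lemma sd_carrier: "sigma_dot v \<in> carrier_mat 2 2"
  by (rule carrier_matI) simp_all

lemma sd_00[simp]: "sigma_dot (v1,v2,v3) $$ (0,0) = complex_of_real v3"
  by (simp add: sigma_dot_def sigma_x_def sigma_y_def sigma_z_def mat_of_rows_list_def)
lemma sd_01[simp]: "sigma_dot (v1,v2,v3) $$ (0,1) = complex_of_real v1 - \<i> * complex_of_real v2"
  by (simp add: sigma_dot_def sigma_x_def sigma_y_def sigma_z_def mat_of_rows_list_def)
lemma sd_10[simp]: "sigma_dot (v1,v2,v3) $$ (1,0) = complex_of_real v1 + \<i> * complex_of_real v2"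
  by (simp add: sigma_dot_def sigma_x_def sigma_y_def sigma_z_def mat_of_rows_list_def)
lemma sd_11[simp]: "sigma_dot (v1,v2,v3) $$ (1,1) = - complex_of_real v3"
  by (simp add: sigma_dot_def sigma_x_def sigma_y_def sigma_z_def mat_of_rows_list_def)

lemma sd_01'[simp]: "sigma_dot (v1,v2,v3) $$ (0,Suc 0) = complex_of_real v1 - \<i> * complex_of_real v2"
  using sd_01 by simp
lemma sd_10'[simp]: "sigma_dot (v1,v2,v3) $$ (Suc 0,0) = complex_of_real v1 + \<i> * complex_of_real v2"
  using sd_10 by simp
lemma sd_11'[simp]: "sigma_dot (v1,v2,v3) $$ (Suc 0,Suc 0) = - complex_of_real v3"
  using sd_11 by simp

lemma less2: "i < (2::nat) \<Longrightarrow> i = 0 \<or> i = 1" by auto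

lemma pm_sd:
  assumes "unit_vec3 v"
  shows "pm_observable 2 (sigma_dot v)"
proof -
  obtain v1 v2 v3 where v: "v = (v1,v2,v3)" by (cases v) auto
  have h: "v1*v1 + v2*v2 + v3*v3 = 1" using assms by (simp add: v unit_vec3_def power2_eq_square)
  have adj: "mat_adjoint (sigma_dot v) = sigma_dot v"
  proof (rule eq_matI)
    fix i j assume "i < dim_row (sigma_dot v)" "j < dim_col (sigma_dot v)"
    then have i: "i < 2" and j: "j < 2" by simp_all
    show "mat_adjoint (sigma_dot v) $$ (i,j) = sigma_dot v $$ (i,j)"
      unfolding adj_index[OF sd_carrier i j] v
      using less2[OF i] less2[OF j]
      by (auto simp: complex_eq_iff)
  qed (simp_all add: adj_carrier[OF sd_carrier, THEN carrier_matD(1)] adj_carrier[OF sd_carrier, THEN carrier_matD(2)])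
  have sq: "sigma_dot v * sigma_dot v = 1\<^sub>m 2"
  proof (rule eq_matI)
    fix i j assume "i < dim_row (1\<^sub>m 2::complex mat)" "j < dim_col (1\<^sub>m 2::complex mat)"
    then have i: "i < 2" and j: "j < 2" by simp_all
    show "(sigma_dot v * sigma_dot v) $$ (i,j) = 1\<^sub>m 2 $$ (i,j)"
      unfolding mult_index[OF sd_carrier sd_carrier i j] sum2
      using less2[OF i] less2[OF j] i j h
      by (auto simp: v complex_eq_iff algebra_simps)
  qed simp_all
  show ?thesis unfolding pm_observable_def using adj sq sd_carrier by simp
qed

lemma pm_transpose:
  assumes "pm_observable D A"
  shows "pm_observable D (transpose_mat A)"
proof -
  have A: "A \<in> carrier_mat D D" "A * A = 1\<^sub>m D" using assms by (auto simp: pm_observable_def)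
  have T: "transpose_mat A \<in> carrier_mat D D" using A by simp
  have adj: "mat_adjoint (transpose_mat A) = transpose_mat A"
  proof (rule eq_matI)
    fix i j assume "i < dim_row (transpose_mat A)" "j < dim_col (transpose_mat A)"
    then have i: "i < D" and j: "j < D" using T by auto
    show "mat_adjoint (transpose_mat A) $$ (i,j) = transpose_mat A $$ (i,j)"
      unfolding adj_index[OF T i j] using A(1) i j herm_entry[OF assms j i] by simp
  qed (use adj_carrier[OF T] T in auto)
  have "transpose_mat A * transpose_mat A = transpose_mat (A * A)"
    using transpose_mult[OF A(1) A(1)] by simp
  also have "\<dots> = 1\<^sub>m D" using A(2) by simp
  finally show ?thesis unfolding pm_observable_def using adj T by simp
qed

definition phi :: "complex Matrix.vec" where
  "phi = vec 4 (\<lambda>i. if i = 0 \<or> i = 3 then complex_of_real (sqrt 2 / 2) else 0)"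

lemma sum4: "(\<Sum>k<(4::nat). f k) = f 0 + f 1 + f 2 + f 3"
  by (simp add: eval_nat_numeral)

lemma phi_unit: "unit_state 2 phi"
  unfolding unit_state_def phi_def by (simp add: sum4 power_divide)

lemma te_phi:
  "tensor_expect 2 phi (sigma_dot (a1,a2,a3)) (transpose_mat (sigma_dot (b1,b2,b3)))
     = complex_of_real (a1*b1 + a2*b2 + a3*b3)"
  unfolding tensor_expect_def sum2 phi_def
  apply (simp add: complex_eq_iff algebra_simps power2_eq_square)
  apply (simp add: field_simps)
  done

lemma Z4_sum: "(\<Sum>x\<in>Z4_alice. \<Sum>y\<in>Z4_bob. M_Z4 x y * g x y) =
    (g (1,2) 1 - g (1,2) 2) + (g (1,3) 1 - g (1,3) 3) + (g (1,4) 1 - g (1,4) 4)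
  + (g (2,3) 2 - g (2,3) 3) + (g (2,4) 2 - g (2,4) 4) + (g (3,4) 3 - g (3,4) 4)"
  unfolding Z4_alice_eq Z4_bob_eq by (simp add: M_Z4_def)

lemma pm_le: "(a::real) \<in> {-1,1} \<Longrightarrow> a * c \<le> \<bar>c\<bar>" by auto

lemma classical_max: "is_max (classical_values Z4_alice Z4_bob M_Z4) 8"
proof -
  have val: "(\<Sum>x\<in>Z4_alice. \<Sum>y\<in>Z4_bob. M_Z4 x y * a x * b y) =
    a (1,2) * (b 1 - b 2) + a (1,3) * (b 1 - b 3) + a (1,4) * (b 1 - b 4)
  + a (2,3) * (b 2 - b 3) + a (2,4) * (b 2 - b 4) + a (3,4) * (b 3 - b 4)" for a :: "nat \<times> nat \<Rightarrow> real" and b :: "nat \<Rightarrow> real"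
    using Z4_sum[of "\<lambda>x y. a x * b y"] by (simp add: mult.assoc right_diff_distrib)
  define b0 :: "nat \<Rightarrow> real" where "b0 k = (if k \<le> 2 then 1 else -1)" for k
  have mem: "(8::real) \<in> classical_values Z4_alice Z4_bob M_Z4"
  proof -
    have "(8::real) = (\<Sum>x\<in>Z4_alice. \<Sum>y\<in>Z4_bob. M_Z4 x y * (\<lambda>_. 1) x * b0 y)"
      unfolding val by (simp add: b0_def)
    moreover have "(\<forall>x\<in>Z4_alice. (\<lambda>_. 1::real) x \<in> {-1, 1}) \<and> (\<forall>y\<in>Z4_bob. b0 y \<in> {-1, 1})"
      by (simp add: b0_def)
    ultimately show ?thesis unfolding classical_values_def
      by (intro CollectI exI[of _ "\<lambda>_. 1::real"] exI[of _ b0]) simp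
  qed
  have ub: "s \<le> 8" if s_in: "s \<in> classical_values Z4_alice Z4_bob M_Z4" for s
  proof -
    obtain a b where s: "s = (\<Sum>x\<in>Z4_alice. \<Sum>y\<in>Z4_bob. M_Z4 x y * a x * b y)"
      and a: "\<forall>x\<in>Z4_alice. a x \<in> {-1, 1}" and b: "\<forall>y\<in>Z4_bob. b y \<in> {-1::real, 1}"
      using s_in unfolding classical_values_def by blast
    have a': "a (1,2) \<in> {-1,1}" "a (1,3) \<in> {-1,1}" "a (1,4) \<in> {-1,1}" "a (2,3) \<in> {-1,1}" "a (2,4) \<in> {-1,1}" "a (3,4) \<in> {-1,1}"
      using a by (simp_all add: Z4_alice_eq)
    have b': "b 1 \<in> {-1,1}" "b 2 \<in> {-1,1}" "b 3 \<in> {-1,1}" "b 4 \<in> {-1,1}"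
      using b by (simp_all add: Z4_bob_eq)
    have "s \<le> \<bar>b 1 - b 2\<bar> + \<bar>b 1 - b 3\<bar> + \<bar>b 1 - b 4\<bar> + \<bar>b 2 - b 3\<bar> + \<bar>b 2 - b 4\<bar> + \<bar>b 3 - b 4\<bar>"
      unfolding s val using pm_le[OF a'(1)] pm_le[OF a'(2)] pm_le[OF a'(3)] pm_le[OF a'(4)] pm_le[OF a'(5)] pm_le[OF a'(6)]
      by (meson add_mono)
    also have "\<dots> \<le> 8" using b' by auto
    finally show ?thesis .
  qed
  show ?thesis unfolding is_max_def using mem ub by blast
qed

lemma xz_unit: "v \<in> xz_circle \<Longrightarrow> unit_vec3 v" by (auto simp: xz_circle_def unit_vec3_def)
lemma sphere_unit: "v \<in> sphere3 \<Longrightarrow> unit_vec3 v" by (simp add: sphere3_def)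

lemma bell_le_pairs:
  assumes psi: "unit_state D psi" and A: "\<forall>x\<in>Z4_alice. pm_observable D (A x)"
  shows "bell_value Z4_alice Z4_bob M_Z4 D psi A B \<le>
      sqrt (NN D (\<lambda>a b. Wv D psi (B 1) a b - Wv D psi (B 2) a b)) + sqrt (NN D (\<lambda>a b. Wv D psi (B 1) a b - Wv D psi (B 3) a b))
       + sqrt (NN D (\<lambda>a b. Wv D psi (B 1) a b - Wv D psi (B 4) a b)) + sqrt (NN D (\<lambda>a b. Wv D psi (B 2) a b - Wv D psi (B 3) a b))
       + sqrt (NN D (\<lambda>a b. Wv D psi (B 2) a b - Wv D psi (B 4) a b)) + sqrt (NN D (\<lambda>a b. Wv D psi (B 3) a b - Wv D psi (B 4) a b))"
proof -
  have NU: "NN D (Uv D psi (A x)) = 1" if "x \<in> Z4_alice" for x using NN_U[OF _ psi] A that by simp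
  have T: "Re (tensor_expect D psi (A x) (B i)) - Re (tensor_expect D psi (A x) (B j))
     \<le> sqrt (NN D (\<lambda>a b. Wv D psi (B i) a b - Wv D psi (B j) a b))" if "x \<in> Z4_alice" for x i j
    unfolding te_IP by (rule pair_bound[OF NU[OF that]])
  show ?thesis
    unfolding bell_Z4
    using T[of "(1,2)" 1 2] T[of "(1,3)" 1 3] T[of "(1,4)" 1 4] T[of "(2,3)" 2 3] T[of "(2,4)" 2 4] T[of "(3,4)" 3 4]
    by (simp add: Z4_alice_eq)
qed

lemma NN_xz:
  assumes psi: "unit_state 2 psi"
  shows "NN 2 (\<lambda>a b. Wv 2 psi (transpose_mat (sigma_dot (p1,0,p3))) a b - Wv 2 psi (transpose_mat (sigma_dot (q1,0,q3))) a b)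
     = (p1-q1)\<^sup>2 + (p3-q3)\<^sup>2"
proof -
  define M where "M j k = transpose_mat (sigma_dot (p1,0,p3)) $$ (j,k) - transpose_mat (sigma_dot (q1,0,q3)) $$ (j,k)" for j k
  define c where "c = (p1-q1)\<^sup>2 + (p3-q3)\<^sup>2"
  have "NN 2 (\<lambda>a b. Wv 2 psi (transpose_mat (sigma_dot (p1,0,p3))) a b - Wv 2 psi (transpose_mat (sigma_dot (q1,0,q3))) a b)
      = (\<Sum>a<2. \<Sum>b<2. (cmod (\<Sum>k<2. psi $ (a*2+k) * M b k))\<^sup>2)"
    unfolding NN_def Wv_def M_def by (simp only: right_diff_distrib sum_subtractf)
  also have "\<dots> = (\<Sum>a<2. c * (\<Sum>k<2. (cmod (psi $ (a*2+k)))\<^sup>2))"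
  proof (rule sum.cong[OF refl], rule core_norm)
    fix k k' :: nat assume k: "k < 2" and k': "k' < 2"
    show "(\<Sum>j<2. cnj (M j k) * M j k') = (if k = k' then complex_of_real c else 0)"
      unfolding sum2 M_def c_def using less2[OF k] less2[OF k']
      by (auto simp: complex_eq_iff power2_eq_square algebra_simps)
  qed
  also have "\<dots> = c * NN 2 (\<lambda>a b. psi $ (a*2+b))" by (simp add: NN_def sum_distrib_left)
  also have "\<dots> = c" using unit_NN[OF psi] by simp
  finally show ?thesis unfolding c_def .
qed

lemma xz_bound:
  assumes psi: "unit_state 2 psi" and a: "\<forall>x\<in>Z4_alice. a x \<in> xz_circle" and b: "\<forall>y\<in>Z4_bob. b y \<in> xz_circle"
  shows "bell_value Z4_alice Z4_bob M_Z4 2 psi (\<lambda>x. sigma_dot (a x)) (\<lambda>y. transpose_mat (sigma_dot (b y))) \<le> 4 * (1 + sqrt 2)"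
proof -
  have "\<exists>t. b k = (sin t, 0, cos t)" if "k \<in> Z4_bob" for k
    using b that unfolding xz_circle_def by blast
  then obtain t1 t2 t3 t4 where t: "b 1 = (sin t1, 0, cos t1)" "b 2 = (sin t2, 0, cos t2)"
     "b 3 = (sin t3, 0, cos t3)" "b 4 = (sin t4, 0, cos t4)"
    unfolding Z4_bob_eq by (metis insertCI)
  have A: "\<forall>x\<in>Z4_alice. pm_observable 2 (sigma_dot (a x))" using a pm_sd xz_unit by blast
  have "bell_value Z4_alice Z4_bob M_Z4 2 psi (\<lambda>x. sigma_dot (a x)) (\<lambda>y. transpose_mat (sigma_dot (b y)))
     \<le> sqrt ((sin t1 - sin t2)\<^sup>2 + (cos t1 - cos t2)\<^sup>2) + sqrt ((sin t1 - sin t3)\<^sup>2 + (cos t1 - cos t3)\<^sup>2)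
 + sqrt ((sin t1 - sin t4)\<^sup>2 + (cos t1 - cos t4)\<^sup>2) + sqrt ((sin t2 - sin t3)\<^sup>2 + (cos t2 - cos t3)\<^sup>2)
 + sqrt ((sin t2 - sin t4)\<^sup>2 + (cos t2 - cos t4)\<^sup>2) + sqrt ((sin t3 - sin t4)\<^sup>2 + (cos t3 - cos t4)\<^sup>2)"
    using bell_le_pairs[OF psi A, of "\<lambda>y. transpose_mat (sigma_dot (b y))"]
    unfolding t NN_xz[OF psi] .
  also have "\<dots> \<le> 4 * (1 + sqrt 2)" by (rule planar)
  finally show ?thesis .
qed

lemma qubit_sub_quantum: "qubit_values sphere3 Z4_alice Z4_bob M_Z4 \<subseteq> quantum_values Z4_alice Z4_bob M_Z4"
proof
  fix s assume "s \<in> qubit_values sphere3 Z4_alice Z4_bob M_Z4"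
  then obtain psi a b where s: "s = bell_value Z4_alice Z4_bob M_Z4 2 psi (\<lambda>x. sigma_dot (a x)) (\<lambda>y. transpose_mat (sigma_dot (b y)))"
    and psi: "unit_state 2 psi" and a: "\<forall>x\<in>Z4_alice. a x \<in> sphere3" and b: "\<forall>y\<in>Z4_bob. b y \<in> sphere3"
    unfolding qubit_values_def by blast
  have A: "\<forall>x\<in>Z4_alice. pm_observable 2 ((\<lambda>x. sigma_dot (a x)) x)" using a pm_sd sphere_unit by auto
  have B: "\<forall>y\<in>Z4_bob. pm_observable 2 ((\<lambda>y. transpose_mat (sigma_dot (b y))) y)" using b pm_sd sphere_unit pm_transpose by auto
  show "s \<in> quantum_values Z4_alice Z4_bob M_Z4"
    unfolding quantum_values_def using s psi A B by blast
qed

lemma quantum_ub: "s \<in> quantum_values Z4_alice Z4_bob M_Z4 \<Longrightarrow> s \<le> 4 * sqrt 6"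
  unfolding quantum_values_def using quantum_bound by blast



lemma xz_memI: "x = sin t \<Longrightarrow> z = cos t \<Longrightarrow> (x, 0, z) \<in> xz_circle"
  unfolding xz_circle_def by blast

definition hh :: real where "hh = sqrt 2 / 2"
definition ss :: real where "ss = sqrt 3 / 3"

definition bS :: "nat \<Rightarrow> real \<times> real \<times> real" where
  "bS k = (if k = 1 then (ss,ss,ss) else if k = 2 then (ss,-ss,-ss) else if k = 3 then (-ss,ss,-ss) else (-ss,-ss,ss))"
definition aS :: "nat \<times> nat \<Rightarrow> real \<times> real \<times> real" where
  "aS x = (if x = (1,2) then (0,hh,hh) else if x = (1,3) then (hh,0,hh) else if x = (1,4) then (hh,hh,0)
     else if x = (2,3) then (hh,-hh,0) else if x = (2,4) then (hh,0,-hh) else (0,hh,-hh))"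

definition bX :: "nat \<Rightarrow> real \<times> real \<times> real" where
  "bX k = (if k = 1 then (0,0,1) else if k = 2 then (1,0,0) else if k = 3 then (0,0,-1) else (-1,0,0))"
definition aX :: "nat \<times> nat \<Rightarrow> real \<times> real \<times> real" where
  "aX x = (if x = (1,2) then (-hh,0,hh) else if x = (1,3) then (0,0,1) else if x = (1,4) then (hh,0,hh)
     else if x = (2,3) then (hh,0,hh) else if x = (2,4) then (1,0,0) else (hh,0,-hh))"

lemma hh_sq: "hh * hh = 1/2" by (simp add: hh_def)
lemma ss_sq: "ss * ss = 1/3" by (simp add: ss_def)

lemma hh_ss: "24 * hh * ss = 4 * sqrt 6"
proof -
  have "sqrt 6 = sqrt 2 * sqrt 3" by (simp add: real_sqrt_mult[symmetric])
  then show ?thesis by (simp add: hh_def ss_def)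
qed

lemma bS_unit: "bS k \<in> sphere3"
  unfolding bS_def sphere3_def unit_vec3_def using ss_sq by (auto simp: power2_eq_square)
lemma aS_unit: "aS x \<in> sphere3"
  unfolding aS_def sphere3_def unit_vec3_def using hh_sq by (auto simp: power2_eq_square)

lemma valS: "bell_value Z4_alice Z4_bob M_Z4 2 phi (\<lambda>x. sigma_dot (aS x)) (\<lambda>y. transpose_mat (sigma_dot (bS y))) = 4 * sqrt 6"
proof -
  have "bell_value Z4_alice Z4_bob M_Z4 2 phi (\<lambda>x. sigma_dot (aS x)) (\<lambda>y. transpose_mat (sigma_dot (bS y))) = 24 * hh * ss"
    unfolding bell_Z4 by (simp add: aS_def bS_def te_phi algebra_simps)
  then show ?thesis using hh_ss by simp
qed

lemma sin_m45: "sin (-(pi/4)) = - hh" by (simp add: hh_def sin_45)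
lemma cos_m45: "cos (-(pi/4)) = hh" by (simp add: hh_def cos_45)

lemma bX_mem: "bX k \<in> xz_circle"
proof -
  have "(0,0,1) \<in> xz_circle" by (rule xz_memI[of _ 0]) simp_all
  moreover have "(1,0,0) \<in> xz_circle" by (rule xz_memI[of _ "pi/2"]) simp_all
  moreover have "(0,0,-1) \<in> xz_circle" by (rule xz_memI[of _ pi]) simp_all
  moreover have "(-1,0,0) \<in> xz_circle" by (rule xz_memI[of _ "-(pi/2)"]) simp_all
  ultimately show ?thesis unfolding bX_def by auto
qed

lemma aX_mem: "aX x \<in> xz_circle"
proof -
  have "(-hh,0,hh) \<in> xz_circle" by (rule xz_memI[of _ "-(pi/4)"]) (simp_all only: sin_m45 cos_m45)
  moreover have "(0,0,1) \<in> xz_circle" by (rule xz_memI[of _ 0]) simp_all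
  moreover have "(hh,0,hh) \<in> xz_circle" by (rule xz_memI[of _ "pi/4"]) (simp_all add: hh_def sin_45 cos_45)
  moreover have "(1,0,0) \<in> xz_circle" by (rule xz_memI[of _ "pi/2"]) simp_all
  moreover have "(hh,0,-hh) \<in> xz_circle" by (rule xz_memI[of _ "pi - pi/4"]) (simp_all only: sin_pi_minus cos_pi_minus sin_45 cos_45 hh_def)
  ultimately show ?thesis unfolding aX_def by auto
qed

lemma valX: "bell_value Z4_alice Z4_bob M_Z4 2 phi (\<lambda>x. sigma_dot (aX x)) (\<lambda>y. transpose_mat (sigma_dot (bX y))) = 4 * (1 + sqrt 2)"
proof -
  have "bell_value Z4_alice Z4_bob M_Z4 2 phi (\<lambda>x. sigma_dot (aX x)) (\<lambda>y. transpose_mat (sigma_dot (bX y))) = 8 * hh + 4"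
    unfolding bell_Z4 by (simp add: aX_def bX_def te_phi algebra_simps)
  then show ?thesis by (simp add: hh_def)
qed

lemma xz_max: "is_max (qubit_values xz_circle Z4_alice Z4_bob M_Z4) (4 * (1 + sqrt 2))"
proof -
  have mem: "4 * (1 + sqrt 2) \<in> qubit_values xz_circle Z4_alice Z4_bob M_Z4"
    unfolding qubit_values_def
    by (intro CollectI exI[of _ phi] exI[of _ aX] exI[of _ bX]) (simp add: valX phi_unit aX_mem bX_mem)
  have "s \<le> 4 * (1 + sqrt 2)" if s_in: "s \<in> qubit_values xz_circle Z4_alice Z4_bob M_Z4" for s
  proof -
    obtain psi a b where s: "s = bell_value Z4_alice Z4_bob M_Z4 2 psi (\<lambda>x. sigma_dot (a x)) (\<lambda>y. transpose_mat (sigma_dot (b y)))"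
      and psi: "unit_state 2 psi" and a: "\<forall>x\<in>Z4_alice. a x \<in> xz_circle" and b: "\<forall>y\<in>Z4_bob. b y \<in> xz_circle"
      using s_in unfolding qubit_values_def by blast
    show ?thesis unfolding s by (rule xz_bound[OF psi a b])
  qed
  then show ?thesis unfolding is_max_def using mem by blast
qed

lemma memS: "4 * sqrt 6 \<in> qubit_values sphere3 Z4_alice Z4_bob M_Z4"
  unfolding qubit_values_def
  by (intro CollectI exI[of _ phi] exI[of _ aS] exI[of _ bS]) (simp add: valS phi_unit aS_unit bS_unit)

lemma sphere_max: "is_max (qubit_values sphere3 Z4_alice Z4_bob M_Z4) (4 * sqrt 6)"
  unfolding is_max_def using memS qubit_sub_quantum quantum_ub by blast

lemma qv: "quantum_value Z4_alice Z4_bob M_Z4 = 4 * sqrt 6"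
  unfolding quantum_value_def
  by (rule cSup_eq_maximum) (use memS qubit_sub_quantum quantum_ub in auto)

theorem mainTheorem10:
  shows "is_max (classical_values Z4_alice Z4_bob M_Z4) 8 \<and>
     is_max (qubit_values xz_circle Z4_alice Z4_bob M_Z4) (4 * (1 + sqrt 2)) \<and>
     is_max (qubit_values sphere3 Z4_alice Z4_bob M_Z4) (4 * sqrt 6) \<and>
     quantum_value Z4_alice Z4_bob M_Z4 = 4 * sqrt 6"
  using classical_max xz_max sphere_max qv by blast


end
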